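(* Let $d\ge1$, $0<s<d$, and let $\nu$ be a Frostman measure on a compact set $E\subset\mathbb{R}^d$ with $\dim_{\mathcal H}(E)>d-s$. For $\delta\in(0,1]$ and $\alpha\in\mathbb{C}$ with $\operatorname{Re}(\alpha)=\frac{s}{2}$, let $\nu^\delta_\alpha$ be as defined below. Then $\|\nu^\delta_\alpha\|_{L^2(\mathbb{R}^d)}\lesssim1$ with a constant independent of $\delta$.
   Context: A Frostman measure on $E$ is a Borel probability measure supported on $E$ with $\nu(B(x,r))\le Cr^{s'}$ for all $x,r>0$, for some $s'>d-s$. Let $\rho$ be a nonnegative smooth function on $\mathbb{R}^d$ with $\int\rho=1$, supported in the unit ball; set $\rho_\delta(x)=\delta^{-d}\rho(x/\delta)$ and $\nu^\delta=\nu*\rho_\delta$. For $\operatorname{Re}(\beta)>0$, $\nu^\delta_\beta(x)=\frac{2^{(d-\beta)/2}}{\Gamma(\beta/2)}(\nu^\delta*|\cdot|^{-d+\beta})(x)$. *)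

theory Defs
  imports "HOL-Analysis.Analysis" "HOL-Probability.Probability"
begin

coinductive smooth_fun :: "('a::euclidean_space \<Rightarrow> real) \<Rightarrow> bool" where
  "(\<forall>x. f differentiable (at x)) \<Longrightarrow>
   (\<forall>i\<in>Basis. smooth_fun (\<lambda>x. frechet_derivative f (at x) i)) \<Longrightarrow> smooth_fun f"

definition hausdorff_pre :: "real \<Rightarrow> real \<Rightarrow> 'a::euclidean_space set \<Rightarrow> ennreal" where
  "hausdorff_pre t \<epsilon> E =
     (INF C \<in> {C :: nat \<Rightarrow> 'a set. E \<subseteq> (\<Union>i. C i) \<and> (\<forall>i. diameter (C i) \<le> \<epsilon>)}.
        (\<Sum>i. ennreal (diameter (C i) powr t)))"

definition hausdorff_measure :: "real \<Rightarrow> 'a::euclidean_space set \<Rightarrow> ennreal" where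
  "hausdorff_measure t E = (SUP \<epsilon> \<in> {0<..}. hausdorff_pre t \<epsilon> E)"

definition hausdorff_dim :: "'a::euclidean_space set \<Rightarrow> real" where
  "hausdorff_dim E = Inf {t. t \<ge> 0 \<and> hausdorff_measure t E = 0}"

definition frostman_measure :: "'a::euclidean_space measure \<Rightarrow> 'a set \<Rightarrow> real \<Rightarrow> bool" where
  "frostman_measure \<nu> E a \<longleftrightarrow>
     sets \<nu> = sets borel \<and> prob_space \<nu> \<and> emeasure \<nu> (UNIV - E) = 0 \<and>
     (\<exists>C s'. s' > a \<and> (\<forall>x r. r > 0 \<longrightarrow> measure \<nu> (ball x r) \<le> C * r powr s'))"

definition mollifier :: "('a::euclidean_space \<Rightarrow> real) \<Rightarrow> real \<Rightarrow> 'a \<Rightarrow> real" where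
  "mollifier \<rho> \<delta> x = \<delta> powr (- real DIM('a)) * \<rho> (x /\<^sub>R \<delta>)"

definition mollified :: "'a::euclidean_space measure \<Rightarrow> ('a \<Rightarrow> real) \<Rightarrow> real \<Rightarrow> 'a \<Rightarrow> real" where
  "mollified \<nu> \<rho> \<delta> x = (\<integral>y. mollifier \<rho> \<delta> (x - y) \<partial>\<nu>)"

definition riesz_nu :: "'a::euclidean_space measure \<Rightarrow> ('a \<Rightarrow> real) \<Rightarrow> real \<Rightarrow> complex \<Rightarrow> 'a \<Rightarrow> complex" where
  "riesz_nu \<nu> \<rho> \<delta> \<beta> x =
     (2 powr ((of_nat DIM('a) - \<beta>) / 2) / Gamma (\<beta> / 2)) *
     (\<integral>y. complex_of_real (mollified \<nu> \<rho> \<delta> y) *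
            complex_of_real (norm (x - y)) powr (\<beta> - of_nat DIM('a)) \<partial>lborel)"

end

theory Submission
  imports Defs
begin

definition Ek :: "real \<Rightarrow> real \<Rightarrow> ennreal" where
  "Ek g t = (if t = 0 then \<infinity> else ennreal (t powr (-g)))"

lemma Ek_measurable[measurable (raw)]:
  assumes [measurable]: "f \<in> borel_measurable M"
  shows "(\<lambda>x. Ek g (f x)) \<in> borel_measurable M"
  unfolding Ek_def by measurable

lemma cball_ind_measurable[measurable (raw)]:
  fixes f g :: "'b \<Rightarrow> 'a::euclidean_space"
  assumes [measurable]: "f \<in> borel_measurable M" "g \<in> borel_measurable M"
  shows "(\<lambda>x. indicator (cball (f x) d) (g x) :: ennreal) \<in> borel_measurable M"
proof -
  have eq: "(\<lambda>x. indicator (cball (f x) d) (g x) :: ennreal) = (\<lambda>x. if dist (f x) (g x) \<le> d then 1 else 0)"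
    by (auto simp: indicator_def fun_eq_iff)
  show ?thesis unfolding eq by measurable
qed

definition kk :: "real \<Rightarrow> 'a::euclidean_space \<Rightarrow> 'a \<Rightarrow> ennreal" where
  "kk p x y = ennreal (dist x y powr p)"

lemma kk_measurable[measurable (raw)]:
  assumes [measurable]: "f \<in> borel_measurable M" "g \<in> borel_measurable M"
  shows "(\<lambda>x. kk p (f x) (g x)) \<in> borel_measurable M"
  unfolding kk_def by measurable

lemma suminf_const_top:
  fixes c :: ennreal assumes "c > 0" shows "(\<Sum>k::nat. c) = \<infinity>"
proof (rule ccontr)
  assume "(\<Sum>k::nat. c) \<noteq> \<infinity>"
  then obtain r where r: "(\<Sum>k::nat. c) = ennreal r" "r \<ge> 0"
    by (cases "(\<Sum>k::nat. c)") auto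
  have le: "\<forall>N. of_nat N * c \<le> ennreal r"
  proof
    fix N
    have "of_nat N * c = (\<Sum>k<N. c)" by simp
    also have "\<dots> \<le> (\<Sum>k. c)" by (rule sum_le_suminf) auto
    finally show "of_nat N * c \<le> ennreal r" using r by simp
  qed
  have "of_nat 1 * c \<le> ennreal r" using le by blast
  then have cr: "c \<le> ennreal r" by (simp only: of_nat_1 mult_1)
  have "ennreal r < \<infinity>" by simp
  with cr have "c < \<infinity>" by (rule le_less_trans)
  then obtain c' where c': "c = ennreal c'" "c' > 0" using assms
    by (cases c) auto
  obtain N where N: "r < of_nat N * c'"
    using reals_Archimedean3[OF c'(2)] by blast
  have "of_nat N * c = ennreal (of_nat N * c')" using c' 
    by (simp add: ennreal_mult'' ennreal_of_nat_eq_real_of_nat)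
  then have "ennreal (of_nat N * c') \<le> ennreal r" using le by metis
  then have "of_nat N * c' \<le> r" using r(2) by (rule ennreal_le_iff[THEN iffD1, rotated])
  with N show False by linarith
qed

lemma ennreal_term_le_suminf:
  fixes f :: "nat \<Rightarrow> ennreal" shows "f k \<le> (\<Sum>i. f i)"
proof -
  have "f k = (\<Sum>i\<in>{k}. f i)" by simp
  also have "\<dots> \<le> (\<Sum>i. f i)" by (rule sum_le_suminf) auto
  finally show ?thesis .
qed

lemma term_eq:
  fixes R g t :: real assumes "R > 0"
  shows "(R / 2 ^ Suc k) powr (-g) * (R / 2^k) powr t = 2 powr g * R powr (t - g) * (2 powr (g - t)) ^ k"
proof -
  have l1: "ln ((2::real) ^ Suc k) = (real k + 1) * ln 2" using ln_realpow[of 2 "Suc k"] by simp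
  have "(R / 2 ^ Suc k) powr (-g) * (R / 2^k) powr t = exp (-g * ln (R / 2 ^ Suc k)) * exp (t * ln (R / 2 ^ k))"
    using assms by (simp add: powr_def del: power_Suc)
  also have "\<dots> = exp (-g * (ln R - (real k + 1) * ln 2)) * exp (t * (ln R - real k * ln 2))"
    using assms by (simp add: ln_div l1 ln_realpow del: power_Suc)
  also have "\<dots> = exp (g * ln 2) * exp ((t - g) * ln R) * exp (real k * ((g - t) * ln 2))"
    by (simp add: exp_add[symmetric] algebra_simps)
  also have "\<dots> = 2 powr g * R powr (t - g) * (2 powr (g - t)) ^ k"
    using assms by (simp add: powr_def exp_of_nat_mult)
  finally show ?thesis .
qed

lemma geom_sum:
  fixes K q :: real assumes "0 \<le> K" "0 \<le> q" "q < 1"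
  shows "(\<Sum>k. ennreal (K * q ^ k)) = ennreal (K / (1 - q))"
proof -
  have s: "summable (\<lambda>k. K * q ^ k)" using assms by (intro summable_mult summable_geometric) auto
  have "(\<Sum>k. ennreal (K * q ^ k)) = ennreal (\<Sum>k. K * q ^ k)"
    using assms s by (intro suminf_ennreal2) auto
  also have "(\<Sum>k. K * q ^ k) = K / (1 - q)"
    using assms by (simp add: suminf_mult suminf_geometric summable_geometric)
  finally show ?thesis .
qed

lemma near_bound:
  fixes \<mu> :: "'a::metric_space measure"
  assumes sets: "sets \<mu> = sets borel" and A: "0 \<le> A"
    and ball: "\<And>r. r > 0 \<Longrightarrow> emeasure \<mu> (ball w r) \<le> ennreal (A * r powr t)"
    and g: "0 < g" "g < t" and R: "R > 0"
  shows "(\<integral>\<^sup>+y. Ek g (dist w y) * indicator (ball w R) y \<partial>\<mu>)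
          \<le> ennreal (A * 2 powr g * R powr (t - g) / (1 - 2 powr (g - t)))"
proof -
  define r where "r k = R / 2^k" for k::nat
  define c where "c k = (r (Suc k)) powr (-g)" for k
  have rpos: "r k > 0" for k using R by (simp add: r_def)
  have pw: "Ek g (dist w y) * indicator (ball w R) y
      \<le> (\<Sum>k. ennreal (c k) * indicator (ball w (r k)) y)" for y
  proof (cases "dist w y < R")
    case False then show ?thesis by simp
  next
    case True
    show ?thesis
    proof (cases "dist w y = 0")
      case True
      have "(\<Sum>k. ennreal (R powr -g)) \<le> (\<Sum>k. ennreal (c k) * indicator (ball w (r k)) y)"
      proof (rule suminf_le)
        fix k
        have "(1::real) \<le> 2 ^ Suc k" by (rule one_le_power) simp
        then have "r (Suc k) \<le> R" using R by (simp add: r_def divide_le_eq)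
        then have "R powr -g \<le> c k" unfolding c_def
          using rpos g by (intro powr_mono2') auto
        moreover have "y \<in> ball w (r k)" using True rpos[of k] by simp
        ultimately show "ennreal (R powr -g) \<le> ennreal (c k) * indicator (ball w (r k)) y"
          by (simp add: ennreal_leI)
      qed auto
      moreover have "(\<Sum>k. ennreal (R powr -g)) = \<infinity>"
        using R by (intro suminf_const_top) simp
      ultimately show ?thesis by (simp add: top_unique)
    next
      case False
      define d where "d = dist w y"
      have d: "0 < d" "d < R" using False True by (auto simp: d_def)
      obtain n where n: "R / d < 2 ^ n" using real_arch_pow[of 2 "R/d"] by auto
      have ex: "\<exists>n. r n \<le> d" 
        using n d by (intro exI[of _ n]) (auto simp: r_def field_simps)
      define m where "m = (LEAST n. r n \<le> d)"
      have m1: "r m \<le> d" unfolding m_def by (rule LeastI_ex[OF ex])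
      have m0: "m \<noteq> 0"
      proof
        assume "m = 0"
        with m1 d show False by (simp add: r_def)
      qed
      then obtain k where k: "m = Suc k" by (cases m) auto
      have "\<not> r k \<le> d" using not_less_Least[of k "\<lambda>n. r n \<le> d"] k unfolding m_def by auto
      then have dk: "d < r k" by simp
      have "d powr -g \<le> c k" unfolding c_def using m1 k rpos g by (intro powr_mono2') auto
      moreover have "Ek g (dist w y) = ennreal (d powr -g)" using d by (simp add: Ek_def d_def)
      moreover have "y \<in> ball w R" "y \<in> ball w (r k)" using d dk by (simp_all add: d_def)
      ultimately have "Ek g (dist w y) * indicator (ball w R) y \<le> ennreal (c k) * indicator (ball w (r k)) y"
        by (simp add: ennreal_leI)
      also have "\<dots> \<le> (\<Sum>k. ennreal (c k) * indicator (ball w (r k)) y)"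
        by (rule ennreal_term_le_suminf)
      finally show ?thesis .
    qed
  qed
  have "(\<integral>\<^sup>+y. Ek g (dist w y) * indicator (ball w R) y \<partial>\<mu>)
      \<le> (\<integral>\<^sup>+y. (\<Sum>k. ennreal (c k) * indicator (ball w (r k)) y) \<partial>\<mu>)"
    by (intro nn_integral_mono pw)
  also have "\<dots> = (\<Sum>k. \<integral>\<^sup>+y. ennreal (c k) * indicator (ball w (r k)) y \<partial>\<mu>)"
  proof (rule nn_integral_suminf)
    fix k
    have [measurable]: "ball w (r k) \<in> sets borel" by auto
    show "(\<lambda>y. ennreal (c k) * indicator (ball w (r k)) y) \<in> borel_measurable \<mu>"
      unfolding measurable_cong_sets[OF sets refl] by measurable
  qed
  also have "\<dots> = (\<Sum>k. ennreal (c k) * emeasure \<mu> (ball w (r k)))"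
    using sets by (intro suminf_cong nn_integral_cmult_indicator) auto
  also have "\<dots> \<le> (\<Sum>k. ennreal (c k) * ennreal (A * r k powr t))"
    using ball rpos by (intro suminf_le mult_left_mono) auto
  also have "\<dots> = (\<Sum>k. ennreal ((A * 2 powr g * R powr (t - g)) * (2 powr (g - t)) ^ k))"
  proof (intro suminf_cong)
    fix k
    have "c k * (A * r k powr t) = A * ((R / 2 ^ Suc k) powr (-g) * (R / 2^k) powr t)"
      by (simp add: c_def r_def)
    also have "\<dots> = (A * 2 powr g * R powr (t - g)) * (2 powr (g - t)) ^ k"
      using term_eq[OF R] by simp
    finally have e: "c k * (A * r k powr t) = (A * 2 powr g * R powr (t - g)) * (2 powr (g - t)) ^ k" .
    have "ennreal (c k) * ennreal (A * r k powr t) = ennreal (c k * (A * r k powr t))"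
      by (rule ennreal_mult'[symmetric]) (simp add: c_def)
    then show "ennreal (c k) * ennreal (A * r k powr t) = ennreal ((A * 2 powr g * R powr (t - g)) * (2 powr (g - t)) ^ k)" by (simp only: e)
  qed
  also have "\<dots> = ennreal (A * 2 powr g * R powr (t - g) / (1 - 2 powr (g - t)))"
    using A g by (intro geom_sum) (auto intro!: powr_less_one)
  finally show ?thesis .
qed

lemma term_eq2:
  fixes R b t :: real assumes "R > 0"
  shows "(R * 2 ^ k) powr (-b) * (R * 2 ^ Suc k) powr t = 2 powr t * R powr (t - b) * (2 powr (t - b)) ^ k"
proof -
  have l1: "ln ((2::real) ^ Suc k) = (real k + 1) * ln 2" using ln_realpow[of 2 "Suc k"] by simp
  have "(R * 2 ^ k) powr (-b) * (R * 2 ^ Suc k) powr t = exp (-b * ln (R * 2 ^ k)) * exp (t * ln (R * 2 ^ Suc k))"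
    using assms by (simp add: powr_def del: power_Suc)
  also have "\<dots> = exp (-b * (ln R + real k * ln 2)) * exp (t * (ln R + (real k + 1) * ln 2))"
    using assms by (simp add: ln_mult l1 ln_realpow del: power_Suc)
  also have "\<dots> = exp (t * ln 2) * exp ((t - b) * ln R) * exp (real k * ((t - b) * ln 2))"
    by (simp add: exp_add[symmetric] algebra_simps)
  also have "\<dots> = 2 powr t * R powr (t - b) * (2 powr (t - b)) ^ k"
    using assms by (simp add: powr_def exp_of_nat_mult)
  finally show ?thesis .
qed

lemma far_bound:
  fixes \<mu> :: "'a::metric_space measure"
  assumes sets: "sets \<mu> = sets borel" and A: "0 \<le> A"
    and ball: "\<And>r. r > 0 \<Longrightarrow> emeasure \<mu> (ball w r) \<le> ennreal (A * r powr t)"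
    and b: "t < b" and R: "R > 0" and t0: "0 \<le> t"
  shows "(\<integral>\<^sup>+y. ennreal (dist w y powr (-b)) * indicator (- ball w R) y \<partial>\<mu>)
          \<le> ennreal (A * 2 powr t * R powr (t - b) / (1 - 2 powr (t - b)))"
proof -
  define r where "r k = R * 2^k" for k::nat
  define c where "c k = (r k) powr (-b)" for k
  have rpos: "r k > 0" for k using R by (simp add: r_def)
  have pw: "ennreal (dist w y powr (-b)) * indicator (- ball w R) y
      \<le> (\<Sum>k. ennreal (c k) * indicator (ball w (r (Suc k))) y)" for y
  proof (cases "dist w y < R")
    case True then show ?thesis by simp
  next
    case False
    define d where "d = dist w y"
    have d: "0 < d" "R \<le> d" using False R by (auto simp: d_def)
    obtain n where n: "d / R < 2 ^ n" using real_arch_pow[of 2 "d/R"] by auto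
    have ex: "\<exists>n. d < r n"
      using n R by (intro exI[of _ n]) (auto simp: r_def field_simps)
    define m where "m = (LEAST n. d < r n)"
    have m1: "d < r m" unfolding m_def by (rule LeastI_ex[OF ex])
    have m0: "m \<noteq> 0"
    proof
      assume "m = 0"
      with m1 d show False by (simp add: r_def)
    qed
    then obtain k where k: "m = Suc k" by (cases m) auto
    have "\<not> d < r k" using not_less_Least[of k "\<lambda>n. d < r n"] k unfolding m_def by auto
    then have dk: "r k \<le> d" by simp
    have "d powr -b \<le> c k" unfolding c_def using dk rpos b R d t0 by (intro powr_mono2') auto
    moreover have "y \<in> - ball w R" "y \<in> ball w (r (Suc k))" using d m1 k by (simp_all add: d_def)
    ultimately have "ennreal (dist w y powr (-b)) * indicator (- ball w R) y \<le> ennreal (c k) * indicator (ball w (r (Suc k))) y"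
      by (simp add: ennreal_leI d_def)
    also have "\<dots> \<le> (\<Sum>k. ennreal (c k) * indicator (ball w (r (Suc k))) y)"
      by (rule ennreal_term_le_suminf)
    finally show ?thesis .
  qed
  have "(\<integral>\<^sup>+y. ennreal (dist w y powr (-b)) * indicator (- ball w R) y \<partial>\<mu>)
      \<le> (\<integral>\<^sup>+y. (\<Sum>k. ennreal (c k) * indicator (ball w (r (Suc k))) y) \<partial>\<mu>)"
    by (intro nn_integral_mono pw)
  also have "\<dots> = (\<Sum>k. \<integral>\<^sup>+y. ennreal (c k) * indicator (ball w (r (Suc k))) y \<partial>\<mu>)"
  proof (rule nn_integral_suminf)
    fix k
    have [measurable]: "ball w (r (Suc k)) \<in> sets borel" by auto
    show "(\<lambda>y. ennreal (c k) * indicator (ball w (r (Suc k))) y) \<in> borel_measurable \<mu>"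
      unfolding measurable_cong_sets[OF sets refl] by measurable
  qed
  also have "\<dots> = (\<Sum>k. ennreal (c k) * emeasure \<mu> (ball w (r (Suc k))))"
    using sets by (intro suminf_cong nn_integral_cmult_indicator) auto
  also have "\<dots> \<le> (\<Sum>k. ennreal (c k) * ennreal (A * r (Suc k) powr t))"
    using ball rpos by (intro suminf_le mult_left_mono) auto
  also have "\<dots> = (\<Sum>k. ennreal ((A * 2 powr t * R powr (t - b)) * (2 powr (t - b)) ^ k))"
  proof (intro suminf_cong)
    fix k
    have "c k * (A * r (Suc k) powr t) = A * ((R * 2 ^ k) powr (-b) * (R * 2 ^ Suc k) powr t)"
      by (simp add: c_def r_def)
    also have "\<dots> = (A * 2 powr t * R powr (t - b)) * (2 powr (t - b)) ^ k"
      using term_eq2[OF R] by simp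
    finally have e: "c k * (A * r (Suc k) powr t) = (A * 2 powr t * R powr (t - b)) * (2 powr (t - b)) ^ k" .
    have "ennreal (c k) * ennreal (A * r (Suc k) powr t) = ennreal (c k * (A * r (Suc k) powr t))"
      by (rule ennreal_mult'[symmetric]) (simp add: c_def)
    then show "ennreal (c k) * ennreal (A * r (Suc k) powr t) = ennreal ((A * 2 powr t * R powr (t - b)) * (2 powr (t - b)) ^ k)" by (simp only: e)
  qed
  also have "\<dots> = ennreal (A * 2 powr t * R powr (t - b) / (1 - 2 powr (t - b)))"
    using A b by (intro geom_sum) (auto intro!: powr_less_one)
  finally show ?thesis .
qed

lemma lborel_ball_bound:
  "r > 0 \<Longrightarrow> emeasure lborel (ball (w::'a::euclidean_space) r) \<le> ennreal (unit_ball_vol (DIM('a)) * r powr (DIM('a)))"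
  by (simp add: emeasure_ball powr_realpow)

lemma pt_real:
  fixes u v h p :: real
  assumes "0 < u" "u \<le> v" "2 * h \<le> u + v" "h > 0" "p > 0"
  shows "u powr -p * v powr -p \<le> (if u < h then h powr -p * u powr -p else u powr (-(2*p)))"
proof (cases "u < h")
  case True
  have "v powr -p \<le> h powr -p" using assms True by (intro powr_mono2') auto
  then have "u powr -p * v powr -p \<le> u powr -p * h powr -p" by (intro mult_left_mono) auto
  then show ?thesis using True by (simp add: mult.commute)
next
  case False
  have "v powr -p \<le> u powr -p" using assms by (intro powr_mono2') auto
  then have "u powr -p * v powr -p \<le> u powr -p * u powr -p" by (intro mult_left_mono) auto
  also have "\<dots> = u powr (-(2*p))" using assms by (simp add: powr_add[symmetric])
  finally show ?thesis using False by simp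
qed

lemma pt_enn:
  fixes y z x :: "'a::euclidean_space" and h p :: real
  assumes "dist y z = 2 * h" "h > 0" "p > 0"
  defines "f \<equiv> \<lambda>y x. ennreal (h powr -p) * (Ek p (dist y x) * indicator (ball y h) x)
       + ennreal (dist y x powr (-(2*p))) * indicator (- ball y h) x"
  shows "ennreal (dist x y powr (-p)) * ennreal (dist x z powr (-p)) \<le> f y x + f z x"
proof -
  define u v where "u = dist y x" and "v = dist z x"
  have uv: "2 * h \<le> u + v" using assms(1) dist_triangle[of y z x] unfolding u_def v_def
    by (simp add: dist_commute)
  have fb: "ennreal (if u < h then h powr -p * u powr -p else u powr (-(2*p))) \<le> f y x"
    if "u > 0" "u = dist y x" for u and y :: 'a
    using that assms(2) by (auto simp: f_def Ek_def indicator_def dist_commute ennreal_mult)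
  show ?thesis
  proof (cases "u = 0 \<or> v = 0")
    case True then show ?thesis by (auto simp: u_def v_def dist_commute)
  next
    case False
    then have up: "u > 0" "v > 0" by (auto simp: u_def v_def)
    show ?thesis
    proof (cases "u \<le> v")
      case True
      have "ennreal (dist x y powr (-p)) * ennreal (dist x z powr (-p)) = ennreal (u powr -p * v powr -p)"
        by (simp add: u_def v_def dist_commute ennreal_mult)
      also have "\<dots> \<le> ennreal (if u < h then h powr -p * u powr -p else u powr (-(2*p)))"
        using pt_real[OF up(1) True uv assms(2,3)] by (intro ennreal_leI)
      also have "\<dots> \<le> f y x" by (rule fb[OF up(1) u_def])
      finally show ?thesis by (simp add: add_increasing2)
    next
      case False
      have "ennreal (dist x y powr (-p)) * ennreal (dist x z powr (-p)) = ennreal (v powr -p * u powr -p)"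
        by (simp add: u_def v_def dist_commute ennreal_mult mult.commute)
      also have "\<dots> \<le> ennreal (if v < h then h powr -p * v powr -p else v powr (-(2*p)))"
        using pt_real[OF up(2) _ _ assms(2,3)] False uv by (intro ennreal_leI) auto
      also have "\<dots> \<le> f z x" by (rule fb[OF up(2) v_def])
      finally show ?thesis by (simp add: add_increasing)
    qed
  qed
qed

lemma bracket:
  fixes g :: real assumes g: "0 < g" "g < real DIM('a)"
  shows "\<exists>K>0. \<forall>\<delta>>0. \<forall>w w'::'a::euclidean_space.
    (\<integral>\<^sup>+y. \<integral>\<^sup>+z. indicator (cball w \<delta>) y * indicator (cball w' \<delta>) z * Ek g (dist y z) \<partial>lborel \<partial>lborel)
      \<le> ennreal (K * \<delta> powr (2 * real DIM('a))) * Ek g (dist w w')"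
proof -
  define n where "n = real DIM('a)"
  define V where "V = unit_ball_vol n"
  have V: "V > 0" by (simp add: V_def n_def)
  have q: "2 powr (g - n) < 1" using g by (simp add: powr_less_one n_def)
  define N1 where "N1 = V * 2 powr g / (1 - 2 powr (g - n))"
  have N1: "N1 > 0" unfolding N1_def using V q by auto
  define K where "K = 2 powr g * V\<^sup>2 + V * N1 * 6 powr (n - g) * 4 powr g"
  have K: "K > 0" unfolding K_def using V N1 by (intro add_pos_pos) auto
  have ballb: "emeasure lborel (ball x r) \<le> ennreal (V * r powr n)" if "r > 0" for x :: 'a and r
    using lborel_ball_bound[OF that, of x] by (simp add: V_def n_def)
  have cb: "emeasure lborel (cball x r) = ennreal (V * r powr n)" if "r > 0" for x :: 'a and r
    using emeasure_cball[of r x] that by (simp add: V_def n_def powr_realpow)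
  have [measurable]: "ball x r \<in> sets borel" "cball x r \<in> sets borel" for x :: 'a and r by auto
  have main: "(\<integral>\<^sup>+y. \<integral>\<^sup>+z. indicator (cball w \<delta>) y * indicator (cball w' \<delta>) z * Ek g (dist y z) \<partial>lborel \<partial>lborel)
      \<le> ennreal (K * \<delta> powr (2 * n)) * Ek g (dist w w')" if \<delta>: "\<delta> > 0" for \<delta> and w w' :: 'a
  proof (cases "dist w w' = 0")
    case True then show ?thesis using K \<delta> by (simp add: Ek_def ennreal_mult_top)
  next
    case False
    define D where "D = dist w w'"
    have D: "D > 0" using False by (simp add: D_def)
    have EkD: "Ek g (dist w w') = ennreal (D powr -g)" using False by (simp add: Ek_def D_def)
    have vd: "V * \<delta> powr n \<ge> 0" using V by simp
    show ?thesis
    proof (cases "4 * \<delta> \<le> D")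
      case True
      define c where "c = 2 powr g * D powr -g"
      have c0: "c \<ge> 0" by (simp add: c_def)
      have pw: "indicator (cball w \<delta>) y * indicator (cball w' \<delta>) z * Ek g (dist y z)
          \<le> ennreal c * indicator (cball w \<delta>) y * indicator (cball w' \<delta>) z" for y z
      proof (cases "y \<in> cball w \<delta> \<and> z \<in> cball w' \<delta>")
        case False then show ?thesis by (auto simp: indicator_def)
      next
        case yz: True
        have t1: "dist w w' \<le> dist w y + dist y w'" by (rule dist_triangle)
        have t2: "dist y w' \<le> dist y z + dist z w'" by (rule dist_triangle)
        have "D \<le> dist w y + dist y z + dist z w'" unfolding D_def using t1 t2 by linarith
        moreover have "dist w y \<le> \<delta>" "dist z w' \<le> \<delta>" using yz by (simp_all add: dist_commute)
        ultimately have "D / 2 \<le> dist y z" using True by linarith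
        then have dyz: "dist y z > 0" "D / 2 \<le> dist y z" using D by auto
        have "dist y z powr -g \<le> (D / 2) powr -g" using dyz D g by (intro powr_mono2') auto
        also have "(D / 2) powr -g = D powr -g / 2 powr -g" by (rule powr_divide; use D in auto)
        also have "\<dots> = c" unfolding c_def by (simp only: powr_minus divide_inverse inverse_inverse_eq mult.commute)
        finally have le: "dist y z powr -g \<le> c" .
        have "Ek g (dist y z) \<le> ennreal c" unfolding Ek_def using dyz le by (auto intro: ennreal_leI)
        then show ?thesis using yz by (simp add: indicator_def)
      qed
      have "(\<integral>\<^sup>+y. \<integral>\<^sup>+z. indicator (cball w \<delta>) y * indicator (cball w' \<delta>) z * Ek g (dist y z) \<partial>lborel \<partial>lborel)
          \<le> (\<integral>\<^sup>+y. \<integral>\<^sup>+z. ennreal c * indicator (cball w \<delta>) y * indicator (cball w' \<delta>) z \<partial>lborel \<partial>lborel)"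
        by (intro nn_integral_mono pw)
      also have "\<dots> = (\<integral>\<^sup>+y. ennreal c * indicator (cball w \<delta>) y * ennreal (V * \<delta> powr n) \<partial>lborel)"
        by (intro nn_integral_cong) (simp add: nn_integral_cmult_indicator cb[OF \<delta>])
      also have "\<dots> = ennreal c * ennreal (V * \<delta> powr n) * ennreal (V * \<delta> powr n)"
        using nn_integral_cmult_indicator[of "cball w \<delta>" lborel "ennreal c * ennreal (V * \<delta> powr n)"]
        by (simp add: cb[OF \<delta>] mult_ac)
      also have "\<dots> = ennreal (c * (V * \<delta> powr n) * (V * \<delta> powr n))"
        using c0 vd by (simp add: ennreal_mult)
      also have "\<dots> \<le> ennreal (K * \<delta> powr (2 * n) * D powr -g)"
      proof (rule ennreal_leI)
        have pp: "\<delta> powr n * \<delta> powr n = \<delta> powr (2 * n)"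
        proof -
          have "\<delta> powr n * \<delta> powr n = \<delta> powr (n + n)" by (rule powr_add[symmetric])
          also have "n + n = 2 * n" by simp
          finally show ?thesis .
        qed
        have "c * (V * \<delta> powr n) * (V * \<delta> powr n) = (2 powr g * V\<^sup>2) * (\<delta> powr n * \<delta> powr n) * D powr -g"
          by (simp add: c_def power2_eq_square mult_ac)
        also have "\<dots> = (2 powr g * V\<^sup>2) * \<delta> powr (2 * n) * D powr -g" by (simp only: pp)
        also have "\<dots> \<le> K * \<delta> powr (2 * n) * D powr -g"
          unfolding K_def using V N1 by (intro mult_right_mono) auto
        finally show "c * (V * \<delta> powr n) * (V * \<delta> powr n) \<le> K * \<delta> powr (2 * n) * D powr -g" .
      qed
      also have "\<dots> = ennreal (K * \<delta> powr (2 * n)) * Ek g (dist w w')"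
        using K by (simp add: EkD ennreal_mult)
      finally show ?thesis .
    next
      case False
      define c where "c = N1 * (6 * \<delta>) powr (n - g)"
      have c0: "c \<ge> 0" using N1 by (simp add: c_def)
      have pw: "indicator (cball w \<delta>) y * indicator (cball w' \<delta>) z * Ek g (dist y z)
          \<le> indicator (cball w \<delta>) y * (Ek g (dist y z) * indicator (ball y (6 * \<delta>)) z)" for y z
      proof (cases "y \<in> cball w \<delta> \<and> z \<in> cball w' \<delta>")
        case False then show ?thesis by (auto simp: indicator_def)
      next
        case yz: True
        have t1: "dist y z \<le> dist y w + dist w z" by (rule dist_triangle)
        have t2: "dist w z \<le> dist w w' + dist w' z" by (rule dist_triangle)
        have "dist y z \<le> dist y w + dist w w' + dist w' z" using t1 t2 by linarith
        moreover have "dist y w \<le> \<delta>" "dist w' z \<le> \<delta>" using yz by (simp_all add: dist_commute)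
        ultimately have "dist y z < 6 * \<delta>" using False \<delta> unfolding D_def by linarith
        then show ?thesis using yz by (simp add: indicator_def)
      qed
      have inner: "(\<integral>\<^sup>+z. Ek g (dist y z) * indicator (ball y (6 * \<delta>)) z \<partial>lborel) \<le> ennreal c" for y :: 'a
      proof -
        have "(\<integral>\<^sup>+z. Ek g (dist y z) * indicator (ball y (6 * \<delta>)) z \<partial>lborel)
            \<le> ennreal (V * 2 powr g * (6 * \<delta>) powr (n - g) / (1 - 2 powr (g - n)))"
          using near_bound[of lborel V y n g "6 * \<delta>"] ballb V g \<delta> by (auto simp: n_def)
        also have "V * 2 powr g * (6 * \<delta>) powr (n - g) / (1 - 2 powr (g - n)) = c"
          by (simp add: c_def N1_def)
        finally show ?thesis .
      qed
      have "(\<integral>\<^sup>+y. \<integral>\<^sup>+z. indicator (cball w \<delta>) y * indicator (cball w' \<delta>) z * Ek g (dist y z) \<partial>lborel \<partial>lborel)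
          \<le> (\<integral>\<^sup>+y. \<integral>\<^sup>+z. indicator (cball w \<delta>) y * (Ek g (dist y z) * indicator (ball y (6 * \<delta>)) z) \<partial>lborel \<partial>lborel)"
        by (intro nn_integral_mono pw)
      also have "\<dots> = (\<integral>\<^sup>+y. indicator (cball w \<delta>) y * (\<integral>\<^sup>+z. Ek g (dist y z) * indicator (ball y (6 * \<delta>)) z \<partial>lborel) \<partial>lborel)"
        by (intro nn_integral_cong nn_integral_cmult) measurable
      also have "\<dots> \<le> (\<integral>\<^sup>+y. ennreal c * indicator (cball w \<delta>) y \<partial>lborel)"
      proof (rule nn_integral_mono)
        fix y
        have "indicator (cball w \<delta>) y * (\<integral>\<^sup>+z. Ek g (dist y z) * indicator (ball y (6 * \<delta>)) z \<partial>lborel)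
            \<le> indicator (cball w \<delta>) y * ennreal c"
          by (rule mult_left_mono[OF inner]) simp
        then show "indicator (cball w \<delta>) y * (\<integral>\<^sup>+z. Ek g (dist y z) * indicator (ball y (6 * \<delta>)) z \<partial>lborel)
            \<le> ennreal c * indicator (cball w \<delta>) y" by (simp only: mult.commute)
      qed
      also have "\<dots> = ennreal c * ennreal (V * \<delta> powr n)"
        by (simp add: nn_integral_cmult_indicator cb[OF \<delta>])
      also have "\<dots> = ennreal (c * (V * \<delta> powr n))" using c0 vd by (simp add: ennreal_mult)
      also have "\<dots> \<le> ennreal (K * \<delta> powr (2 * n) * D powr -g)"
      proof (rule ennreal_leI)
        have d4: "\<delta> powr -g \<le> (D / 4) powr -g" using False D g by (intro powr_mono2') auto
        have "(D / 4) powr -g = D powr -g / 4 powr -g" by (rule powr_divide; use D in auto)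
        also have "\<dots> = 4 powr g * D powr -g" by (simp only: powr_minus divide_inverse inverse_inverse_eq mult.commute)
        finally have d4': "(D / 4) powr -g = 4 powr g * D powr -g" .
        have pq: "\<delta> powr (n - g) * \<delta> powr n = \<delta> powr (2 * n) * \<delta> powr -g"
        proof -
          have "\<delta> powr (n - g) * \<delta> powr n = \<delta> powr (n - g + n)" by (rule powr_add[symmetric])
          also have "n - g + n = 2 * n + -g" by simp
          also have "\<delta> powr (2 * n + -g) = \<delta> powr (2 * n) * \<delta> powr -g" by (rule powr_add)
          finally show ?thesis .
        qed
        have c6: "(6 * \<delta>) powr (n - g) = 6 powr (n - g) * \<delta> powr (n - g)"
          by (intro powr_mult; use \<delta> in auto)
        have "c * (V * \<delta> powr n) = (V * N1 * 6 powr (n - g)) * (\<delta> powr (n - g) * \<delta> powr n)"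
          unfolding c_def c6 by (simp add: mult_ac)
        also have "\<dots> = (V * N1 * 6 powr (n - g)) * (\<delta> powr (2 * n) * \<delta> powr -g)" by (simp only: pq)
        also have "\<dots> \<le> (V * N1 * 6 powr (n - g)) * (\<delta> powr (2 * n) * (4 powr g * D powr -g))"
          using d4 d4' V N1 by (intro mult_left_mono) auto
        also have "\<dots> = (V * N1 * 6 powr (n - g) * 4 powr g) * \<delta> powr (2 * n) * D powr -g" by (simp add: mult_ac)
        also have "\<dots> \<le> K * \<delta> powr (2 * n) * D powr -g"
          unfolding K_def using V by (intro mult_right_mono) auto
        finally show "c * (V * \<delta> powr n) \<le> K * \<delta> powr (2 * n) * D powr -g" .
      qed
      also have "\<dots> = ennreal (K * \<delta> powr (2 * n)) * Ek g (dist w w')"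
        using K by (simp add: EkD ennreal_mult)
      finally show ?thesis .
    qed
  qed
  show ?thesis using K main unfolding n_def by blast
qed

lemma riesz_comp:
  fixes a :: real assumes a: "0 < a" "2 * a < real DIM('a)"
  shows "\<exists>K>0. \<forall>y z::'a::euclidean_space.
    (\<integral>\<^sup>+x. ennreal (dist x y powr (a - real DIM('a))) * ennreal (dist x z powr (a - real DIM('a))) \<partial>lborel)
      \<le> ennreal K * Ek (real DIM('a) - 2 * a) (dist y z)"
proof -
  define n where "n = real DIM('a)"
  define p where "p = n - a"
  define V where "V = unit_ball_vol n"
  have V: "V > 0" by (simp add: V_def n_def)
  have p: "0 < p" "p < n" "n < 2 * p" using a by (auto simp: p_def n_def)
  have q1: "2 powr (p - n) < 1" "2 powr (n - 2 * p) < 1" using p by (auto simp: powr_less_one)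
  define K0 where "K0 = V * 2 powr p / (1 - 2 powr (p - n)) + V * 2 powr n / (1 - 2 powr (n - 2 * p))"
  have K0: "K0 > 0" unfolding K0_def using V q1 by (intro add_pos_pos divide_pos_pos) auto
  define Kc where "Kc = 2 * K0 * 2 powr (n - 2 * a)"
  have Kc: "Kc > 0" using K0 by (simp add: Kc_def)
  have ballb: "emeasure lborel (ball w r) \<le> ennreal (V * r powr n)" if "r > 0" for w :: 'a and r
    using lborel_ball_bound[OF that, of w] by (simp add: V_def n_def)
  have [measurable]: "ball x r \<in> sets borel" for x :: 'a and r by auto
  have main: "(\<integral>\<^sup>+x. ennreal (dist x y powr (a - n)) * ennreal (dist x z powr (a - n)) \<partial>lborel)
      \<le> ennreal Kc * Ek (n - 2 * a) (dist y z)" for y z :: 'a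
  proof (cases "dist y z = 0")
    case True then show ?thesis using Kc by (simp add: Ek_def ennreal_mult_top)
  next
    case False
    define h where "h = dist y z / 2"
    have h: "h > 0" "dist y z = 2 * h" using False by (auto simp: h_def)
    define f :: "'a \<Rightarrow> 'a \<Rightarrow> ennreal" where "f \<equiv> \<lambda>y x. ennreal (h powr -p) * (Ek p (dist y x) * indicator (ball y h) x)
       + ennreal (dist y x powr (-(2*p))) * indicator (- ball y h) x"
    have fi: "(\<integral>\<^sup>+x. f w x \<partial>lborel) \<le> ennreal (K0 * h powr (n - 2 * p))" for w :: 'a
    proof -
      have "(\<integral>\<^sup>+x. f w x \<partial>lborel) = (\<integral>\<^sup>+x. ennreal (h powr -p) * (Ek p (dist w x) * indicator (ball w h) x) \<partial>lborel)
          + (\<integral>\<^sup>+x. ennreal (dist w x powr (-(2*p))) * indicator (- ball w h) x \<partial>lborel)"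
        unfolding f_def by (intro nn_integral_add; measurable)
      also have "(\<integral>\<^sup>+x. ennreal (h powr -p) * (Ek p (dist w x) * indicator (ball w h) x) \<partial>lborel)
          = ennreal (h powr -p) * (\<integral>\<^sup>+x. Ek p (dist w x) * indicator (ball w h) x \<partial>lborel)"
        by (rule nn_integral_cmult) measurable
      also have "\<dots> \<le> ennreal (h powr -p) * ennreal (V * 2 powr p * h powr (n - p) / (1 - 2 powr (p - n)))"
        using near_bound[of lborel V w n p h] ballb V p h by (intro mult_left_mono) auto
      also have "\<dots> = ennreal (h powr (n - 2 * p) * (V * 2 powr p / (1 - 2 powr (p - n))))"
      proof -
        have e2: "h powr -p * h powr (n - p) = h powr (n - 2 * p)" using h by (simp add: powr_add[symmetric])
        have "h powr -p * (V * 2 powr p * h powr (n - p) / (1 - 2 powr (p - n)))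
            = (h powr -p * h powr (n - p)) * (V * 2 powr p / (1 - 2 powr (p - n)))" by simp
        also have "\<dots> = h powr (n - 2 * p) * (V * 2 powr p / (1 - 2 powr (p - n)))" by (simp only: e2)
        finally have r: "h powr -p * (V * 2 powr p * h powr (n - p) / (1 - 2 powr (p - n)))
            = h powr (n - 2 * p) * (V * 2 powr p / (1 - 2 powr (p - n)))" .
        have "ennreal (h powr -p) * ennreal (V * 2 powr p * h powr (n - p) / (1 - 2 powr (p - n)))
           = ennreal (h powr -p * (V * 2 powr p * h powr (n - p) / (1 - 2 powr (p - n))))"
          by (rule ennreal_mult'[symmetric]) simp
        then show ?thesis by (simp only: r)
      qed
      also have "(\<integral>\<^sup>+x. ennreal (dist w x powr (-(2*p))) * indicator (- ball w h) x \<partial>lborel)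
          \<le> ennreal (V * 2 powr n * h powr (n - 2 * p) / (1 - 2 powr (n - 2 * p)))"
        using far_bound[of lborel V w n "2 * p" h] ballb V p h by auto
      finally have "(\<integral>\<^sup>+x. f w x \<partial>lborel) \<le> ennreal (h powr (n - 2 * p) * (V * 2 powr p / (1 - 2 powr (p - n))))
          + ennreal (V * 2 powr n * h powr (n - 2 * p) / (1 - 2 powr (n - 2 * p)))" 
        by (simp add: add_right_mono)
      also have "\<dots> = ennreal (K0 * h powr (n - 2 * p))"
        using V q1 by (subst ennreal_plus[symmetric]) (auto simp: K0_def algebra_simps)
      finally show ?thesis .
    qed
    have "(\<integral>\<^sup>+x. ennreal (dist x y powr (a - n)) * ennreal (dist x z powr (a - n)) \<partial>lborel)
        \<le> (\<integral>\<^sup>+x. f y x + f z x \<partial>lborel)"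
      unfolding f_def
      by (intro nn_integral_mono) (use pt_enn[OF h(2) h(1) p(1)] in \<open>simp add: p_def\<close>)
    also have "\<dots> = (\<integral>\<^sup>+x. f y x \<partial>lborel) + (\<integral>\<^sup>+x. f z x \<partial>lborel)"
      unfolding f_def by (intro nn_integral_add; measurable)
    also have "\<dots> \<le> ennreal (K0 * h powr (n - 2 * p)) + ennreal (K0 * h powr (n - 2 * p))"
      by (intro add_mono fi)
    also have "\<dots> = ennreal Kc * Ek (n - 2 * a) (dist y z)"
    proof -
      have np: "n - 2 * p = - (n - 2 * a)" by (simp add: p_def)
      have "h powr (n - 2 * p) = (dist y z / 2) powr (- (n - 2 * a))" by (simp only: np h_def)
      also have "\<dots> = dist y z powr (- (n - 2 * a)) / 2 powr (- (n - 2 * a))" by (rule powr_divide) (simp_all)?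
      also have "\<dots> = 2 powr (n - 2 * a) * dist y z powr (- (n - 2 * a))"
        by (simp only: powr_minus divide_inverse inverse_inverse_eq mult.commute)
      finally have e: "h powr (n - 2 * p) = 2 powr (n - 2 * a) * dist y z powr (- (n - 2 * a))" .
      have "ennreal (K0 * h powr (n - 2 * p)) + ennreal (K0 * h powr (n - 2 * p)) = ennreal (2 * K0 * h powr (n - 2 * p))"
        using K0 by (subst ennreal_plus[symmetric]) auto
      also have "\<dots> = ennreal (Kc * dist y z powr (- (n - 2 * a)))" unfolding e Kc_def by (simp add: mult_ac)
      also have "\<dots> = ennreal Kc * Ek (n - 2 * a) (dist y z)"
        using False Kc by (simp add: Ek_def ennreal_mult)
      finally show ?thesis .
    qed
    finally show ?thesis .
  qed
  show ?thesis using Kc main unfolding n_def by blast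
qed

lemma energy:
  fixes \<nu> :: "'a::euclidean_space measure"
  assumes sv[measurable_cong]: "sets \<nu> = sets borel" and pv: "prob_space \<nu>" and A: "0 \<le> A"
    and ball: "\<And>w r. r > 0 \<Longrightarrow> emeasure \<nu> (ball w r) \<le> ennreal (A * r powr t)"
    and g: "0 < g" "g < t"
  shows "\<exists>L\<ge>0. \<forall>w. (\<integral>\<^sup>+w'. Ek g (dist w w') \<partial>\<nu>) \<le> ennreal L"
proof -
  interpret P: prob_space \<nu> by (rule pv)
  have [measurable]: "ball x r \<in> sets borel" for x :: 'a and r by auto
  define N where "N = A * 2 powr g * 1 powr (t - g) / (1 - 2 powr (g - t))"
  have q: "2 powr (g - t) < 1" using g by (simp add: powr_less_one)
  have N0: "N \<ge> 0" unfolding N_def using A q by (intro divide_nonneg_pos) auto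
  have "(\<integral>\<^sup>+w'. Ek g (dist w w') \<partial>\<nu>) \<le> ennreal (N + 1)" for w
  proof -
    have pw: "Ek g (dist w w') \<le> Ek g (dist w w') * indicator (ball w 1) w' + 1" for w'
    proof (cases "dist w w' < 1")
      case True then show ?thesis by simp
    next
      case False
      then have "dist w w' powr (-g) \<le> 1" using g
        by (simp add: powr_minus divide_le_eq_1 ge_one_powr_ge_zero inverse_le_1_iff) 
      moreover have "dist w w' \<noteq> 0" using False by auto
      ultimately show ?thesis using False by (simp add: Ek_def)
    qed
    have "(\<integral>\<^sup>+w'. Ek g (dist w w') \<partial>\<nu>) \<le> (\<integral>\<^sup>+w'. Ek g (dist w w') * indicator (ball w 1) w' + 1 \<partial>\<nu>)"
      by (intro nn_integral_mono pw)
    also have "\<dots> = (\<integral>\<^sup>+w'. Ek g (dist w w') * indicator (ball w 1) w' \<partial>\<nu>) + (\<integral>\<^sup>+w'. 1 \<partial>\<nu>)"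
      by (intro nn_integral_add; measurable)
    also have "\<dots> \<le> ennreal N + 1"
      using near_bound[OF sv A ball g, of 1] by (intro add_mono) (auto simp: N_def P.emeasure_space_1)
    also have "\<dots> = ennreal (N + 1)" using N0 by simp
    finally show ?thesis .
  qed
  then show ?thesis using N0 by (intro exI[of _ "N + 1"]) auto
qed

lemma rho_bounded:
  fixes \<rho> :: "'a::euclidean_space \<Rightarrow> real"
  assumes "smooth_fun \<rho>" "\<forall>x. norm x > 1 \<longrightarrow> \<rho> x = 0"
  shows "\<exists>M\<ge>0. \<forall>x. \<rho> x \<le> M"
proof -
  from assms(1) have "\<forall>x. \<rho> differentiable (at x)" by (cases rule: smooth_fun.cases) auto
  then have cont: "continuous_on UNIV \<rho>"
    by (simp add: continuous_at_imp_continuous_on differentiable_imp_continuous_within)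
  have "compact (\<rho> ` cball 0 1)"
    by (rule compact_continuous_image[OF continuous_on_subset[OF cont] compact_cball]) auto
  then obtain B where B: "\<forall>y\<in>\<rho> ` cball 0 1. norm y \<le> B"
    using compact_imp_bounded bounded_iff by metis
  have "\<rho> x \<le> max B 0" for x
  proof (cases "norm x \<le> 1")
    case True then have "norm (\<rho> x) \<le> B" using B by auto
    then show ?thesis by auto
  next
    case False then show ?thesis using assms(2) by auto
  qed
  then show ?thesis by (intro exI[of _ "max B 0"]) auto
qed

lemma moll_bound:
  fixes \<rho> :: "'a::euclidean_space \<Rightarrow> real"
  assumes "\<forall>x. norm x > 1 \<longrightarrow> \<rho> x = 0" "\<forall>x. \<rho> x \<ge> 0" "\<forall>x. \<rho> x \<le> M" "\<delta> > 0"
  shows "ennreal \<bar>mollifier \<rho> \<delta> (y - w)\<bar> \<le> ennreal (\<delta> powr (- real DIM('a)) * M) * indicator (cball y \<delta>) w"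
proof (cases "dist y w \<le> \<delta>")
  case True
  have "\<bar>mollifier \<rho> \<delta> (y - w)\<bar> = \<delta> powr (- real DIM('a)) * \<rho> ((y - w) /\<^sub>R \<delta>)"
    using assms(2) by (simp add: mollifier_def)
  also have "\<dots> \<le> \<delta> powr (- real DIM('a)) * M"
    using assms(3) by (intro mult_left_mono) auto
  finally show ?thesis using True by (simp add: ennreal_leI)
next
  case False
  have "norm ((y - w) /\<^sub>R \<delta>) = dist y w / \<delta>" using assms(4) by (simp add: dist_norm divide_inverse mult.commute)
  also have "\<dots> > 1" using False assms(4) by simp
  finally have "\<rho> ((y - w) /\<^sub>R \<delta>) = 0" using assms(1) by auto
  then show ?thesis by (simp add: mollifier_def)
qed
theorem lemma4:
  fixes \<nu> :: "'a::euclidean_space measure" and E :: "'a set"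
    and \<rho> :: "'a \<Rightarrow> real" and s :: real
  assumes "0 < s" and "s < real DIM('a)"
    and "compact E"
    and "hausdorff_dim E > real DIM('a) - s"
    and "frostman_measure \<nu> E (real DIM('a) - s)"
    and "smooth_fun \<rho>" and "\<forall>x. \<rho> x \<ge> 0"
    and "\<rho> integrable_on UNIV" and "integral UNIV \<rho> = 1"
    and "\<forall>x. norm x > 1 \<longrightarrow> \<rho> x = 0"
  shows "\<forall>\<alpha>::complex. Re \<alpha> = s / 2 \<longrightarrow>
           (\<exists>C::real. \<forall>\<delta>\<in>{0<..1}.
              (\<integral>\<^sup>+x. ennreal ((cmod (riesz_nu \<nu> \<rho> \<delta> \<alpha> x))\<^sup>2) \<partial>lborel) \<le> ennreal C)"
proof (intro allI impI)
  fix \<alpha> :: complex assume ha: "Re \<alpha> = s / 2"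
  define n where "n = real DIM('a)"
  define a where "a = s / 2"
  define \<gamma> where "\<gamma> = n - s"
  have a: "0 < a" "2 * a < n" using assms(1,2) by (auto simp: a_def n_def)
  have \<gamma>: "0 < \<gamma>" "\<gamma> < n" "\<gamma> = n - 2 * a" using assms(1,2) by (auto simp: \<gamma>_def n_def a_def)
  obtain M where M: "M \<ge> 0" "\<forall>x. \<rho> x \<le> M" using rho_bounded[OF assms(6,10)] by blast
  have sv[measurable_cong]: "sets \<nu> = sets borel" and pv: "prob_space \<nu>"
    using assms(5) by (auto simp: frostman_measure_def)
  obtain C0 s' where s': "s' > n - s" and C0: "\<forall>x r. r > 0 \<longrightarrow> measure \<nu> (ball x r) \<le> C0 * r powr s'"
    using assms(5) by (auto simp: frostman_measure_def n_def)
  have ballv: "emeasure \<nu> (ball x r) \<le> ennreal (max C0 0 * r powr s')" if "r > 0" for x r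
  proof -
    interpret P: prob_space \<nu> by (rule pv)
    have "emeasure \<nu> (ball x r) = ennreal (measure \<nu> (ball x r))"
      by (rule P.emeasure_eq_measure)
    also have "\<dots> \<le> ennreal (max C0 0 * r powr s')"
      using C0 that by (intro ennreal_leI) (smt (verit) mult_right_mono powr_ge_zero)
    finally show ?thesis .
  qed
  obtain Kc where Kc: "Kc > 0" "\<forall>y z::'a. (\<integral>\<^sup>+x. ennreal (dist x y powr (a - n)) * ennreal (dist x z powr (a - n)) \<partial>lborel)
      \<le> ennreal Kc * Ek \<gamma> (dist y z)"
    using riesz_comp[of a, where 'a='a] a \<gamma> unfolding n_def by auto
  obtain K2 where K2: "K2 > 0" "\<forall>\<delta>>0. \<forall>w w'::'a.
    (\<integral>\<^sup>+y. \<integral>\<^sup>+z. indicator (cball w \<delta>) y * indicator (cball w' \<delta>) z * Ek \<gamma> (dist y z) \<partial>lborel \<partial>lborel)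
      \<le> ennreal (K2 * \<delta> powr (2 * n)) * Ek \<gamma> (dist w w')"
    using bracket[of \<gamma>, where 'a='a] \<gamma> unfolding n_def by auto
  obtain L where L: "L \<ge> 0" "\<forall>w. (\<integral>\<^sup>+w'. Ek \<gamma> (dist w w') \<partial>\<nu>) \<le> ennreal L"
    using energy[OF sv pv _ ballv, of \<gamma>] s' \<gamma>(1,2) unfolding \<gamma>_def by auto
  define cst where "cst = cmod (2 powr ((of_nat DIM('a) - \<alpha>) / 2) / Gamma (\<alpha> / 2))"
  show "\<exists>C::real. \<forall>\<delta>\<in>{0<..1}.
              (\<integral>\<^sup>+x. ennreal ((cmod (riesz_nu \<nu> \<rho> \<delta> \<alpha> x))\<^sup>2) \<partial>lborel) \<le> ennreal C"
  proof (intro exI ballI)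
    fix \<delta> :: real assume "\<delta> \<in> {0<..1}"
    then have \<delta>: "\<delta> > 0" by auto
    interpret P: prob_space \<nu> by (rule pv)
    have LLp: "pair_sigma_finite lborel lborel"
      by (simp add: pair_sigma_finite_def sigma_finite_lborel)
    have LVp: "pair_sigma_finite lborel \<nu>"
      by (simp add: pair_sigma_finite_def sigma_finite_lborel P.sigma_finite_measure_axioms)
    define Md where "Md = \<delta> powr (- n) * M"
    define m where "m y = (\<integral>\<^sup>+w. ennreal Md * indicator (cball y \<delta>) w \<partial>\<nu>)" for y
    have m_meas[measurable]: "m \<in> borel_measurable borel" unfolding m_def by measurable
    define I where "I x = (\<integral>\<^sup>+y. m y * kk (a - n) x y \<partial>lborel)" for x
    have step1: "ennreal (cmod (riesz_nu \<nu> \<rho> \<delta> \<alpha> x)) \<le> ennreal cst * I x" for x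
    proof -
      define F where "F = (\<lambda>y. complex_of_real (mollified \<nu> \<rho> \<delta> y) *
            complex_of_real (norm (x - y)) powr (\<alpha> - of_nat DIM('a)))"
      have r: "riesz_nu \<nu> \<rho> \<delta> \<alpha> x = (2 powr ((of_nat DIM('a) - \<alpha>) / 2) / Gamma (\<alpha> / 2)) * integral\<^sup>L lborel F"
        unfolding riesz_nu_def F_def ..
      have i: "ennreal (cmod (integral\<^sup>L lborel F)) \<le> (\<integral>\<^sup>+y. ennreal (cmod (F y)) \<partial>lborel)"
      proof (cases "integrable lborel F")
        case True then show ?thesis by (rule integral_norm_bound_ennreal)
      next
        case False then show ?thesis by (simp add: not_integrable_integral_eq)
      qed
      have mb: "ennreal \<bar>mollified \<nu> \<rho> \<delta> y\<bar> \<le> m y" for y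
      proof -
        have "ennreal \<bar>mollified \<nu> \<rho> \<delta> y\<bar> \<le> (\<integral>\<^sup>+w. ennreal \<bar>mollifier \<rho> \<delta> (y - w)\<bar> \<partial>\<nu>)"
        proof (cases "integrable \<nu> (\<lambda>w. mollifier \<rho> \<delta> (y - w))")
          case True then show ?thesis unfolding mollified_def using integral_norm_bound_ennreal[OF True] by simp
        next
          case False then show ?thesis by (simp add: mollified_def not_integrable_integral_eq)
        qed
        also have "\<dots> \<le> m y" unfolding m_def Md_def n_def
          by (intro nn_integral_mono moll_bound) (use assms(7,10) M \<delta> in auto)
        finally show ?thesis .
      qed
      have Fb: "ennreal (cmod (F y)) \<le> m y * kk (a - n) x y" for y
      proof -
        have "cmod (F y) = \<bar>mollified \<nu> \<rho> \<delta> y\<bar> * dist x y powr (a - n)"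
          unfolding F_def norm_mult by (simp add: norm_powr_real_powr dist_norm a_def n_def ha)
        then show ?thesis unfolding kk_def using mb[of y] by (simp add: ennreal_mult' mult_right_mono)
      qed
      have "ennreal (cmod (riesz_nu \<nu> \<rho> \<delta> \<alpha> x)) = ennreal cst * ennreal (cmod (integral\<^sup>L lborel F))"
        unfolding r cst_def norm_mult by (simp add: ennreal_mult')
      also have "\<dots> \<le> ennreal cst * I x" unfolding I_def
        by (intro mult_left_mono order.trans[OF i] nn_integral_mono Fb) auto
      finally show ?thesis .
    qed
    have cst0: "cst \<ge> 0" by (simp add: cst_def)
    have sq: "ennreal ((cmod (riesz_nu \<nu> \<rho> \<delta> \<alpha> x))\<^sup>2) \<le> ennreal (cst\<^sup>2) * (I x * I x)" for x
    proof -
      have "ennreal ((cmod (riesz_nu \<nu> \<rho> \<delta> \<alpha> x))\<^sup>2)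
          = ennreal (cmod (riesz_nu \<nu> \<rho> \<delta> \<alpha> x)) * ennreal (cmod (riesz_nu \<nu> \<rho> \<delta> \<alpha> x))"
        by (simp add: power2_eq_square ennreal_mult')
      also have "\<dots> \<le> (ennreal cst * I x) * (ennreal cst * I x)" by (intro mult_mono step1) auto
      also have "\<dots> = ennreal (cst\<^sup>2) * (I x * I x)" using cst0 by (simp add: power2_eq_square ennreal_mult' mult_ac)
      finally show ?thesis .
    qed
    have I_meas[measurable]: "I \<in> borel_measurable borel" unfolding I_def by measurable
    have II: "I x * I x = (\<integral>\<^sup>+y. \<integral>\<^sup>+z. m y * kk (a - n) x y * (m z * kk (a - n) x z) \<partial>lborel \<partial>lborel)" for x
    proof -
      have "I x * I x = (\<integral>\<^sup>+y. m y * kk (a - n) x y * I x \<partial>lborel)"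
        unfolding I_def[of x] by (rule nn_integral_multc[symmetric]) measurable
      also have "\<dots> = (\<integral>\<^sup>+y. \<integral>\<^sup>+z. m y * kk (a - n) x y * (m z * kk (a - n) x z) \<partial>lborel \<partial>lborel)"
        unfolding I_def by (intro nn_integral_cong nn_integral_cmult[symmetric]) measurable
      finally show ?thesis .
    qed
    have tri: "(\<integral>\<^sup>+x. I x * I x \<partial>lborel)
        = (\<integral>\<^sup>+y. \<integral>\<^sup>+z. m y * m z * (\<integral>\<^sup>+x. kk (a - n) x y * kk (a - n) x z \<partial>lborel) \<partial>lborel \<partial>lborel)"
    proof -
      have "(\<integral>\<^sup>+x. I x * I x \<partial>lborel)
          = (\<integral>\<^sup>+x. \<integral>\<^sup>+y. \<integral>\<^sup>+z. m y * kk (a - n) x y * (m z * kk (a - n) x z) \<partial>lborel \<partial>lborel \<partial>lborel)"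
        by (simp add: II)
      also have "\<dots> = (\<integral>\<^sup>+y. \<integral>\<^sup>+x. \<integral>\<^sup>+z. m y * kk (a - n) x y * (m z * kk (a - n) x z) \<partial>lborel \<partial>lborel \<partial>lborel)"
      proof -
        have "(\<lambda>(x, y). \<integral>\<^sup>+z. m y * kk (a - n) x y * (m z * kk (a - n) x z) \<partial>lborel) \<in> borel_measurable (lborel \<Otimes>\<^sub>M lborel)"
          by measurable
        from pair_sigma_finite.Fubini'[OF LLp this] show ?thesis by simp
      qed
      also have "\<dots> = (\<integral>\<^sup>+y. \<integral>\<^sup>+z. \<integral>\<^sup>+x. m y * kk (a - n) x y * (m z * kk (a - n) x z) \<partial>lborel \<partial>lborel \<partial>lborel)"
      proof (rule nn_integral_cong)
        fix y
        have "(\<lambda>(x, z). m y * kk (a - n) x y * (m z * kk (a - n) x z)) \<in> borel_measurable (lborel \<Otimes>\<^sub>M lborel)"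
          by measurable
        from pair_sigma_finite.Fubini'[OF LLp this] show "(\<integral>\<^sup>+x. \<integral>\<^sup>+z. m y * kk (a - n) x y * (m z * kk (a - n) x z) \<partial>lborel \<partial>lborel)
            = (\<integral>\<^sup>+z. \<integral>\<^sup>+x. m y * kk (a - n) x y * (m z * kk (a - n) x z) \<partial>lborel \<partial>lborel)" by simp
      qed
      also have "\<dots> = (\<integral>\<^sup>+y. \<integral>\<^sup>+z. m y * m z * (\<integral>\<^sup>+x. kk (a - n) x y * kk (a - n) x z \<partial>lborel) \<partial>lborel \<partial>lborel)"
      proof (intro nn_integral_cong)
        fix y z
        have "(\<integral>\<^sup>+x. m y * kk (a - n) x y * (m z * kk (a - n) x z) \<partial>lborel) = (\<integral>\<^sup>+x. (m y * m z) * (kk (a - n) x y * kk (a - n) x z) \<partial>lborel)"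
          by (simp add: mult_ac)
        also have "\<dots> = m y * m z * (\<integral>\<^sup>+x. kk (a - n) x y * kk (a - n) x z \<partial>lborel)"
          by (rule nn_integral_cmult) measurable
        finally show "(\<integral>\<^sup>+x. m y * kk (a - n) x y * (m z * kk (a - n) x z) \<partial>lborel) = m y * m z * (\<integral>\<^sup>+x. kk (a - n) x y * kk (a - n) x z \<partial>lborel)" .
      qed
      finally show ?thesis .
    qed
    define J where "J = (\<integral>\<^sup>+y. \<integral>\<^sup>+z. m y * m z * Ek \<gamma> (dist y z) \<partial>lborel \<partial>lborel)"
    have step4: "(\<integral>\<^sup>+x. I x * I x \<partial>lborel) \<le> ennreal Kc * J"
    proof -
      have "(\<integral>\<^sup>+x. I x * I x \<partial>lborel) \<le> (\<integral>\<^sup>+y. \<integral>\<^sup>+z. m y * m z * (ennreal Kc * Ek \<gamma> (dist y z)) \<partial>lborel \<partial>lborel)"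
        unfolding tri using Kc(2) unfolding kk_def by (intro nn_integral_mono mult_left_mono) auto
      also have "\<dots> = (\<integral>\<^sup>+y. ennreal Kc * (\<integral>\<^sup>+z. m y * m z * Ek \<gamma> (dist y z) \<partial>lborel) \<partial>lborel)"
        by (intro nn_integral_cong) (simp add: nn_integral_cmult[symmetric] mult_ac)
      also have "\<dots> = ennreal Kc * J"
        unfolding J_def by (rule nn_integral_cmult) measurable
      finally show ?thesis .
    qed
    have step5: "J \<le> ennreal (M\<^sup>2 * K2 * L)"
    proof -
      have mm: "m y * m z * Ek \<gamma> (dist y z) = (\<integral>\<^sup>+w. \<integral>\<^sup>+w'. ennreal Md * indicator (cball y \<delta>) w *
           (ennreal Md * indicator (cball z \<delta>) w' * Ek \<gamma> (dist y z)) \<partial>\<nu> \<partial>\<nu>)" for y z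
      proof -
        have e1: "m z * Ek \<gamma> (dist y z) = (\<integral>\<^sup>+w'. ennreal Md * indicator (cball z \<delta>) w' * Ek \<gamma> (dist y z) \<partial>\<nu>)"
          unfolding m_def by (rule nn_integral_multc[symmetric]) measurable
        have "m y * m z * Ek \<gamma> (dist y z) = m y * (m z * Ek \<gamma> (dist y z))" by (simp add: mult.assoc)
        also have "\<dots> = (\<integral>\<^sup>+w. ennreal Md * indicator (cball y \<delta>) w * (m z * Ek \<gamma> (dist y z)) \<partial>\<nu>)"
          unfolding m_def[of y] by (rule nn_integral_multc[symmetric]) measurable
        also have "\<dots> = (\<integral>\<^sup>+w. \<integral>\<^sup>+w'. ennreal Md * indicator (cball y \<delta>) w *
           (ennreal Md * indicator (cball z \<delta>) w' * Ek \<gamma> (dist y z)) \<partial>\<nu> \<partial>\<nu>)"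
        proof (rule nn_integral_cong)
          fix w
          show "ennreal Md * indicator (cball y \<delta>) w * (m z * Ek \<gamma> (dist y z)) = (\<integral>\<^sup>+w'. ennreal Md * indicator (cball y \<delta>) w *
           (ennreal Md * indicator (cball z \<delta>) w' * Ek \<gamma> (dist y z)) \<partial>\<nu>)"
            unfolding e1 by (rule nn_integral_cmult[symmetric]) measurable
        qed
        finally show ?thesis .
      qed
      have "J = (\<integral>\<^sup>+y. \<integral>\<^sup>+z. \<integral>\<^sup>+w. \<integral>\<^sup>+w'. ennreal Md * indicator (cball y \<delta>) w *
           (ennreal Md * indicator (cball z \<delta>) w' * Ek \<gamma> (dist y z)) \<partial>\<nu> \<partial>\<nu> \<partial>lborel \<partial>lborel)"
        unfolding J_def by (simp add: mm)
      also have "\<dots> = (\<integral>\<^sup>+y. \<integral>\<^sup>+w. \<integral>\<^sup>+z. \<integral>\<^sup>+w'. ennreal Md * indicator (cball y \<delta>) w *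
           (ennreal Md * indicator (cball z \<delta>) w' * Ek \<gamma> (dist y z)) \<partial>\<nu> \<partial>lborel \<partial>\<nu> \<partial>lborel)"
      proof (rule nn_integral_cong)
        fix y
        have "(\<lambda>(z, w). \<integral>\<^sup>+w'. ennreal Md * indicator (cball y \<delta>) w *
           (ennreal Md * indicator (cball z \<delta>) w' * Ek \<gamma> (dist y z)) \<partial>\<nu>) \<in> borel_measurable (lborel \<Otimes>\<^sub>M \<nu>)"
          by measurable
        from pair_sigma_finite.Fubini'[OF LVp this] show "(\<integral>\<^sup>+z. \<integral>\<^sup>+w. \<integral>\<^sup>+w'. ennreal Md * indicator (cball y \<delta>) w *
           (ennreal Md * indicator (cball z \<delta>) w' * Ek \<gamma> (dist y z)) \<partial>\<nu> \<partial>\<nu> \<partial>lborel) =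
          (\<integral>\<^sup>+w. \<integral>\<^sup>+z. \<integral>\<^sup>+w'. ennreal Md * indicator (cball y \<delta>) w *
           (ennreal Md * indicator (cball z \<delta>) w' * Ek \<gamma> (dist y z)) \<partial>\<nu> \<partial>lborel \<partial>\<nu>)" by simp
      qed
      also have "\<dots> = (\<integral>\<^sup>+w. \<integral>\<^sup>+y. \<integral>\<^sup>+z. \<integral>\<^sup>+w'. ennreal Md * indicator (cball y \<delta>) w *
           (ennreal Md * indicator (cball z \<delta>) w' * Ek \<gamma> (dist y z)) \<partial>\<nu> \<partial>lborel \<partial>lborel \<partial>\<nu>)"
      proof -
        have "(\<lambda>(y, w). \<integral>\<^sup>+z. \<integral>\<^sup>+w'. ennreal Md * indicator (cball y \<delta>) w *
           (ennreal Md * indicator (cball z \<delta>) w' * Ek \<gamma> (dist y z)) \<partial>\<nu> \<partial>lborel) \<in> borel_measurable (lborel \<Otimes>\<^sub>M \<nu>)"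
          by measurable
        from pair_sigma_finite.Fubini'[OF LVp this] show ?thesis by simp
      qed
      also have "\<dots> = (\<integral>\<^sup>+w. \<integral>\<^sup>+y. \<integral>\<^sup>+w'. \<integral>\<^sup>+z. ennreal Md * indicator (cball y \<delta>) w *
           (ennreal Md * indicator (cball z \<delta>) w' * Ek \<gamma> (dist y z)) \<partial>lborel \<partial>\<nu> \<partial>lborel \<partial>\<nu>)"
      proof (intro nn_integral_cong)
        fix w y
        have "(\<lambda>(z, w'). ennreal Md * indicator (cball y \<delta>) w *
           (ennreal Md * indicator (cball z \<delta>) w' * Ek \<gamma> (dist y z))) \<in> borel_measurable (lborel \<Otimes>\<^sub>M \<nu>)"
          by measurable
        from pair_sigma_finite.Fubini'[OF LVp this] show "(\<integral>\<^sup>+z. \<integral>\<^sup>+w'. ennreal Md * indicator (cball y \<delta>) w *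
           (ennreal Md * indicator (cball z \<delta>) w' * Ek \<gamma> (dist y z)) \<partial>\<nu> \<partial>lborel) =
           (\<integral>\<^sup>+w'. \<integral>\<^sup>+z. ennreal Md * indicator (cball y \<delta>) w *
           (ennreal Md * indicator (cball z \<delta>) w' * Ek \<gamma> (dist y z)) \<partial>lborel \<partial>\<nu>)" by simp
      qed
      also have "\<dots> = (\<integral>\<^sup>+w. \<integral>\<^sup>+w'. \<integral>\<^sup>+y. \<integral>\<^sup>+z. ennreal Md * indicator (cball y \<delta>) w *
           (ennreal Md * indicator (cball z \<delta>) w' * Ek \<gamma> (dist y z)) \<partial>lborel \<partial>lborel \<partial>\<nu> \<partial>\<nu>)"
      proof (rule nn_integral_cong)
        fix w
        have "(\<lambda>(y, w'). \<integral>\<^sup>+z. ennreal Md * indicator (cball y \<delta>) w *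
           (ennreal Md * indicator (cball z \<delta>) w' * Ek \<gamma> (dist y z)) \<partial>lborel) \<in> borel_measurable (lborel \<Otimes>\<^sub>M \<nu>)"
          by measurable
        from pair_sigma_finite.Fubini'[OF LVp this] show "(\<integral>\<^sup>+y. \<integral>\<^sup>+w'. \<integral>\<^sup>+z. ennreal Md * indicator (cball y \<delta>) w *
           (ennreal Md * indicator (cball z \<delta>) w' * Ek \<gamma> (dist y z)) \<partial>lborel \<partial>\<nu> \<partial>lborel) =
           (\<integral>\<^sup>+w'. \<integral>\<^sup>+y. \<integral>\<^sup>+z. ennreal Md * indicator (cball y \<delta>) w *
           (ennreal Md * indicator (cball z \<delta>) w' * Ek \<gamma> (dist y z)) \<partial>lborel \<partial>lborel \<partial>\<nu>)" by simp
      qed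
      also have "\<dots> \<le> (\<integral>\<^sup>+w. \<integral>\<^sup>+w'. ennreal (M\<^sup>2 * K2) * Ek \<gamma> (dist w w') \<partial>\<nu> \<partial>\<nu>)"
      proof (intro nn_integral_mono)
        fix w w' :: 'a
        have ind: "indicator (cball y \<delta>) w = (indicator (cball w \<delta>) y :: ennreal)" for y w :: 'a
          by (simp add: indicator_def dist_commute)
        have pw: "ennreal Md * indicator (cball y \<delta>) w * (ennreal Md * indicator (cball z \<delta>) w' * Ek \<gamma> (dist y z))
            = ennreal (Md * Md) * (indicator (cball w \<delta>) y * indicator (cball w' \<delta>) z * Ek \<gamma> (dist y z))" for y z
          using \<delta> M by (simp add: ind[of y w] ind[of z w'] ennreal_mult Md_def mult_ac)
        have "(\<integral>\<^sup>+y. \<integral>\<^sup>+z. ennreal Md * indicator (cball y \<delta>) w *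
           (ennreal Md * indicator (cball z \<delta>) w' * Ek \<gamma> (dist y z)) \<partial>lborel \<partial>lborel)
          = (\<integral>\<^sup>+y. ennreal (Md * Md) * (\<integral>\<^sup>+z. indicator (cball w \<delta>) y * indicator (cball w' \<delta>) z * Ek \<gamma> (dist y z) \<partial>lborel) \<partial>lborel)"
        proof (rule nn_integral_cong)
          fix y
          show "(\<integral>\<^sup>+z. ennreal Md * indicator (cball y \<delta>) w *
           (ennreal Md * indicator (cball z \<delta>) w' * Ek \<gamma> (dist y z)) \<partial>lborel) = 
            ennreal (Md * Md) * (\<integral>\<^sup>+z. indicator (cball w \<delta>) y * indicator (cball w' \<delta>) z * Ek \<gamma> (dist y z) \<partial>lborel)"
            unfolding pw by (rule nn_integral_cmult) measurable
        qed
        also have "\<dots> = ennreal (Md * Md) * (\<integral>\<^sup>+y. \<integral>\<^sup>+z. indicator (cball w \<delta>) y * indicator (cball w' \<delta>) z * Ek \<gamma> (dist y z) \<partial>lborel \<partial>lborel)"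
          by (rule nn_integral_cmult) measurable
        also have "\<dots> \<le> ennreal (Md * Md) * (ennreal (K2 * \<delta> powr (2 * n)) * Ek \<gamma> (dist w w'))"
          using K2(2) \<delta> by (intro mult_left_mono) auto
        also have "\<dots> = ennreal (M\<^sup>2 * K2) * Ek \<gamma> (dist w w')"
        proof -
          have p: "\<delta> powr (- n) * \<delta> powr (- n) * \<delta> powr (2 * n) = 1"
            using \<delta> by (simp add: powr_add[symmetric])
          have "Md * Md * (K2 * \<delta> powr (2 * n)) = M\<^sup>2 * K2 * (\<delta> powr (- n) * \<delta> powr (- n) * \<delta> powr (2 * n))"
            by (simp add: Md_def power2_eq_square mult_ac)
          also have "\<dots> = M\<^sup>2 * K2" by (simp add: p)
          finally have e: "Md * Md * (K2 * \<delta> powr (2 * n)) = M\<^sup>2 * K2" .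
          have "ennreal (Md * Md) * (ennreal (K2 * \<delta> powr (2 * n)) * Ek \<gamma> (dist w w'))
              = ennreal (Md * Md * (K2 * \<delta> powr (2 * n))) * Ek \<gamma> (dist w w')"
            using K2(1) \<delta> M by (simp add: ennreal_mult mult.assoc Md_def)
          then show ?thesis by (simp add: e)
        qed
        finally show "(\<integral>\<^sup>+y. \<integral>\<^sup>+z. ennreal Md * indicator (cball y \<delta>) w *
           (ennreal Md * indicator (cball z \<delta>) w' * Ek \<gamma> (dist y z)) \<partial>lborel \<partial>lborel)
           \<le> ennreal (M\<^sup>2 * K2) * Ek \<gamma> (dist w w')" .
      qed
      also have "\<dots> \<le> (\<integral>\<^sup>+w. ennreal (M\<^sup>2 * K2) * ennreal L \<partial>\<nu>)"
      proof (rule nn_integral_mono)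
        fix w
        have "(\<integral>\<^sup>+w'. ennreal (M\<^sup>2 * K2) * Ek \<gamma> (dist w w') \<partial>\<nu>) = ennreal (M\<^sup>2 * K2) * (\<integral>\<^sup>+w'. Ek \<gamma> (dist w w') \<partial>\<nu>)"
          by (rule nn_integral_cmult) measurable
        also have "\<dots> \<le> ennreal (M\<^sup>2 * K2) * ennreal L" using L(2) by (intro mult_left_mono) auto
        finally show "(\<integral>\<^sup>+w'. ennreal (M\<^sup>2 * K2) * Ek \<gamma> (dist w w') \<partial>\<nu>) \<le> ennreal (M\<^sup>2 * K2) * ennreal L" .
      qed
      also have "\<dots> = ennreal (M\<^sup>2 * K2 * L)"
        using K2(1) L(1) by (simp add: P.emeasure_space_1 ennreal_mult)
      finally show ?thesis .
    qed
    have "(\<integral>\<^sup>+x. ennreal ((cmod (riesz_nu \<nu> \<rho> \<delta> \<alpha> x))\<^sup>2) \<partial>lborel) \<le> (\<integral>\<^sup>+x. ennreal (cst\<^sup>2) * (I x * I x) \<partial>lborel)"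
      by (intro nn_integral_mono sq)
    also have "\<dots> = ennreal (cst\<^sup>2) * (\<integral>\<^sup>+x. I x * I x \<partial>lborel)"
      by (rule nn_integral_cmult) measurable
    also have "\<dots> \<le> ennreal (cst\<^sup>2) * (ennreal Kc * ennreal (M\<^sup>2 * K2 * L))"
      by (intro mult_left_mono order.trans[OF step4]) (use step5 in auto)
    also have "\<dots> = ennreal (cst\<^sup>2 * Kc * (M\<^sup>2 * K2 * L))"
      using Kc(1) K2(1) L(1) cst0 by (simp add: ennreal_mult mult_ac)
    finally show "(\<integral>\<^sup>+x. ennreal ((cmod (riesz_nu \<nu> \<rho> \<delta> \<alpha> x))\<^sup>2) \<partial>lborel)
       \<le> ennreal (cst\<^sup>2 * Kc * (M\<^sup>2 * K2 * L))" .
  qed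
qed
end
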